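(* For integers $2\le k\le n-1$ and $0\le h\le n-k$, $\kappa_s^{(h)}(S_{n,k})$ exists and $\kappa_s^{(h)}(S_{n,k})\le n+h(k-2)-1$.
   Context: For integers $1\le k\le n-1$, let $I_n=\{1,\dots,n\}$ and $P(n,k)$ the set of $k$-permutations $p_1p_2\cdots p_k$ of distinct elements of $I_n$. The $(n,k)$-star graph $S_{n,k}$ has vertex set $P(n,k)$; a vertex $p=p_1p_2\cdots p_k$ is adjacent to (a) each vertex obtained by swapping $p_1$ with $p_i$ for $2\le i\le k$, and (b) each vertex $\alpha p_2\cdots p_k$ with $\alpha\in I_n\setminus\{p_1,\dots,p_k\}$. For a connected graph $G$ and integer $h\ge 0$, a set $S\subseteq V(G)$ is an $h$-cut ($h$-super vertex-cut) if $G-S$ is disconnected and has minimum degree at least $h$; the $h$-super connectivity $\kappa_s^{(h)}(G)$ is the minimum cardinality of an $h$-cut of $G$. Note $\kappa_s^{(0)}(G)=\kappa(G)$. *)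

theory Defs
  imports Main
begin

definition connected_graph :: "'a set \<Rightarrow> ('a \<Rightarrow> 'a \<Rightarrow> bool) \<Rightarrow> bool" where
  "connected_graph V E \<longleftrightarrow>
     (\<forall>u\<in>V. \<forall>v\<in>V. (\<lambda>x y. x \<in> V \<and> y \<in> V \<and> E x y)\<^sup>*\<^sup>* u v)"

text \<open>Vertex deletion G - S (induced subgraph on V - S) is represented by the vertex set V - S
  with the same adjacency relation (connectivity is computed inside V - S).\<close>

definition degree_in :: "'a set \<Rightarrow> ('a \<Rightarrow> 'a \<Rightarrow> bool) \<Rightarrow> 'a \<Rightarrow> nat" where
  "degree_in V E v = card {u \<in> V. E v u}"

definition min_degree_ge :: "'a set \<Rightarrow> ('a \<Rightarrow> 'a \<Rightarrow> bool) \<Rightarrow> nat \<Rightarrow> bool" where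
  "min_degree_ge V E h \<longleftrightarrow> (\<forall>v\<in>V. h \<le> degree_in V E v)"

definition h_cut :: "'a set \<Rightarrow> ('a \<Rightarrow> 'a \<Rightarrow> bool) \<Rightarrow> nat \<Rightarrow> 'a set \<Rightarrow> bool" where
  "h_cut V E h S \<longleftrightarrow> S \<subseteq> V \<and> \<not> connected_graph (V - S) E \<and> min_degree_ge (V - S) E h"

text \<open>h-super connectivity: minimum cardinality of an h-cut (meaningful when an h-cut exists).\<close>
definition super_conn :: "'a set \<Rightarrow> ('a \<Rightarrow> 'a \<Rightarrow> bool) \<Rightarrow> nat \<Rightarrow> nat" where
  "super_conn V E h = Min {card S | S. h_cut V E h S}"

text \<open>(n,k)-star graph. Vertices: k-permutations of {1..n} as lists (index 0 = p_1).\<close>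
definition kperms :: "nat \<Rightarrow> nat \<Rightarrow> nat list set" where
  "kperms n k = {p. length p = k \<and> distinct p \<and> set p \<subseteq> {1..n}}"

definition star_adj :: "nat \<Rightarrow> nat \<Rightarrow> nat list \<Rightarrow> nat list \<Rightarrow> bool" where
  "star_adj n k p q \<longleftrightarrow> p \<in> kperms n k \<and> q \<in> kperms n k \<and>
     ((\<exists>i\<in>{1..<k}. q = p[0 := p ! i, i := p ! 0]) \<or>
      (\<exists>a\<in>{1..n} - set p. q = a # tl p))"

end

theory Submission imports Defs begin

lemma kperms_cons: "x#t \<in> kperms n k \<longleftrightarrow> length t = k - 1 \<and> 0 < k \<and> x \<notin> set t \<and> distinct t \<and> x \<in> {1..n} \<and> set t \<subseteq> {1..n}"
  by (auto simp: kperms_def)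

lemma adj_iff:
  assumes "x#t \<in> kperms n k"
  shows "star_adj n k (x#t) q \<longleftrightarrow> q \<in> kperms n k \<and>
     ((\<exists>i<k-1. q = t!i # t[i:=x]) \<or> (\<exists>a\<in>{1..n}-set(x#t). q = a#t))"
proof -
  have "(\<exists>j\<in>{1..<k}. q = (x#t)[0 := (x#t)!j, j := (x#t)!0]) \<longleftrightarrow> (\<exists>i<k-1. q = t!i # t[i:=x])"
  proof
    assume "\<exists>j\<in>{1..<k}. q = (x#t)[0 := (x#t)!j, j := (x#t)!0]"
    then obtain j where j: "j\<in>{1..<k}" "q = (x#t)[0 := (x#t)!j, j := (x#t)!0]" by blast
    then obtain i where "j = Suc i" by (cases j) auto
    with j show "\<exists>i<k-1. q = t!i # t[i:=x]" by (intro exI[of _ i]) auto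
  next
    assume "\<exists>i<k-1. q = t!i # t[i:=x]"
    then obtain i where i: "i<k-1" "q = t!i # t[i:=x]" by blast
    then show "\<exists>j\<in>{1..<k}. q = (x#t)[0 := (x#t)!j, j := (x#t)!0]"
      by (intro bexI[of _ "Suc i"]) auto
  qed
  then show ?thesis using assms unfolding star_adj_def by auto
qed

lemma finite_kperms: "finite (kperms n k)"
proof -
  have "kperms n k \<subseteq> {xs. set xs \<subseteq> {1..n} \<and> length xs = k}" by (auto simp: kperms_def)
  thus ?thesis by (rule finite_subset) (rule finite_lists_length_eq, simp)
qed

theorem lemma3p1:
  fixes n k h :: nat
  assumes "2 \<le> k" and "k \<le> n - 1" and "h \<le> n - k"
  shows "(\<exists>S. h_cut (kperms n k) (star_adj n k) h S) \<and>
         super_conn (kperms n k) (star_adj n k) h \<le> n + h * (k - 2) - 1"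
proof -
  define V where "V = kperms n k"
  define E where "E = star_adj n k"
  define T where "T = [1..<k]"
  define A where "A = {k..k+h}"
  define X where "X = (\<lambda>a. a#T) ` A"
  define S where "S = {u\<in>V. \<exists>x\<in>X. E x u} - X"
  have kn: "k + h \<le> n" "2 \<le> k" "k < n" using assms by auto
  have lenT: "length T = k - 1" by (simp add: T_def)
  have setT: "set T = {1..<k}" by (simp add: T_def)
  have distT: "distinct T" by (simp add: T_def)
  have nthT: "\<And>i. i < k-1 \<Longrightarrow> T!i = Suc i" by (simp add: T_def)
  have finV: "finite V" by (simp add: V_def finite_kperms)
  have AT: "\<And>a. a \<in> A \<Longrightarrow> a#T \<in> V"
    using kn by (auto simp: A_def V_def kperms_cons lenT setT distT)
  have XV: "X \<subseteq> V" using AT by (auto simp: X_def)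
  have SX: "S \<inter> X = {}" by (auto simp: S_def)
  have SV: "S \<subseteq> V" by (auto simp: S_def)
  have Sform: "(\<exists>c\<in>{k+h+1..n}. u = c#T) \<or> (\<exists>i<k-1. \<exists>\<alpha>\<in>A. u = Suc i # T[i:=\<alpha>])"
    if "u \<in> S" for u
  proof -
    from that obtain \<alpha> where \<alpha>: "\<alpha>\<in>A" "E (\<alpha>#T) u" "u \<notin> X"
      by (auto simp: S_def X_def)
    have "(\<exists>i<k-1. u = T!i # T[i:=\<alpha>]) \<or> (\<exists>a\<in>{1..n}-set(\<alpha>#T). u = a#T)"
      using \<alpha>(2) adj_iff[OF AT[OF \<alpha>(1), unfolded V_def]] by (auto simp: E_def)
    then show ?thesis
    proof
      assume "\<exists>i<k-1. u = T!i # T[i:=\<alpha>]"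
      then show ?thesis using nthT \<alpha>(1) by auto
    next
      assume "\<exists>a\<in>{1..n}-set(\<alpha>#T). u = a#T"
      then obtain a where a: "a\<in>{1..n}-set(\<alpha>#T)" "u = a#T" by blast
      have "a \<notin> A" using a \<alpha>(3) by (auto simp: X_def)
      then have "a \<in> {k+h+1..n}" using a by (auto simp: A_def setT)
      then show ?thesis using a by auto
    qed
  qed
  have notadj: "\<not> E x v" if "v \<in> V" "v \<notin> S" "v \<notin> X" "x \<in> X" for x v
    using that by (auto simp: S_def)
  have degX: "h \<le> degree_in (V - S) E x" if "x \<in> X" for x
  proof -
    from that obtain \<alpha> where \<alpha>: "\<alpha> \<in> A" "x = \<alpha>#T" by (auto simp: X_def)
    have sub: "(\<lambda>b. b#T) ` (A - {\<alpha>}) \<subseteq> {u \<in> V - S. E x u}"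
    proof
      fix u assume "u \<in> (\<lambda>b. b#T) ` (A - {\<alpha>})"
      then obtain b where b: "b \<in> A" "b \<noteq> \<alpha>" "u = b#T" by auto
      have "u \<in> X" using b by (auto simp: X_def)
      moreover have "E x u" unfolding E_def \<alpha>(2)
        using adj_iff[OF AT[OF \<alpha>(1), unfolded V_def]] AT[OF b(1)] b kn
        by (auto simp: V_def A_def setT)
      ultimately show "u \<in> {u \<in> V - S. E x u}" using XV SX by auto
    qed
    have "card ((\<lambda>b. b#T) ` (A - {\<alpha>})) = h"
      using \<alpha>(1) by (subst card_image) (auto simp: inj_on_def A_def)
    moreover have "finite {u \<in> V - S. E x u}" using finV by auto
    ultimately show ?thesis unfolding degree_in_def using card_mono[OF _ sub] by auto
  qed
  have degR: "h \<le> degree_in (V - S) E v" if v: "v \<in> V" "v \<notin> S" "v \<notin> X" for v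
  proof -
    from v(1) obtain y t where vyt: "v = y#t" unfolding V_def kperms_def
      using kn by (cases v) auto
    have vk: "y#t \<in> kperms n k" using v(1) vyt V_def by simp
    then have lent: "length t = k - 1" and yt: "y \<notin> set t" and dt: "distinct t"
      and yn: "y \<in> {1..n}" and tn: "set t \<subseteq> {1..n}" by (auto simp: kperms_cons)
    define N where "N = {u \<in> V - S. E v u}"
    have finN: "finite N" using finV by (auto simp: N_def)
    define Cl where "Cl = (\<lambda>b. b#t) ` ({1..n} - set v)"
    define Sw where "Sw = (\<lambda>i. t!i # t[i:=y]) ` {..<k-1}"
    have cardCl: "card Cl = n - k"
    proof -
      have "card Cl = card ({1..n} - set v)" unfolding Cl_def by (subst card_image) (auto simp: inj_on_def)
      also have "\<dots> = n - k" using v(1) unfolding V_def kperms_def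
        by (subst card_Diff_subset) (auto simp: distinct_card)
      finally show ?thesis .
    qed
    have cardSw: "card Sw = k - 1"
      unfolding Sw_def using dt lent
      by (subst card_image) (auto simp: inj_on_def nth_eq_iff_index_eq)
    have disj: "Cl \<inter> Sw = {}" unfolding Cl_def Sw_def using lent vyt by auto
    have cardU: "card (Cl \<union> Sw) = n - 1"
      using cardCl cardSw disj kn by (subst card_Un_disjoint) (auto simp: Cl_def Sw_def)
    have ClE: "Cl \<subseteq> {u \<in> V. E v u}"
    proof
      fix u assume "u \<in> Cl"
      then obtain b where b: "b \<in> {1..n} - set v" "u = b#t" by (auto simp: Cl_def)
      have "u \<in> V" using b vk by (auto simp: V_def kperms_cons vyt)
      then show "u \<in> {u \<in> V. E v u}" using adj_iff[OF vk] b by (auto simp: E_def vyt V_def)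
    qed
    have SwE: "Sw \<subseteq> {u \<in> V. E v u}"
    proof
      fix u assume "u \<in> Sw"
      then obtain i where i: "i < k - 1" "u = t!i # t[i:=y]" by (auto simp: Sw_def)
      have "t!i \<in> set t" using i lent by simp
      then have "t!i \<in> {1..n}" using tn by blast
      then have "u \<in> V" using i vk lent yt dt tn yn
        by (auto simp: V_def kperms_cons set_update_distinct distinct_list_update nth_mem)
      then show "u \<in> {u \<in> V. E v u}" using adj_iff[OF vk] i by (auto simp: E_def vyt V_def)
    qed
    show ?thesis
    proof (cases "\<exists>i<k-1. \<exists>\<alpha>\<in>A. t = T[i:=\<alpha>]")
      case False
      have "Cl \<inter> S = {}"
      proof (rule ccontr)
        assume "Cl \<inter> S \<noteq> {}"
        then obtain b where b: "b#t \<in> S" "b \<in> {1..n} - set v" unfolding Cl_def by blast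
        from Sform[OF b(1)] have "t = T" using False by auto
        show False
        proof (cases "y \<in> A")
          case True then show False using v(3) vyt \<open>t = T\<close> by (auto simp: X_def)
        next
          case False
          have kA: "k \<in> A" by (simp add: A_def)
          have "E (k#T) v" unfolding E_def vyt \<open>t = T\<close>
            using adj_iff[OF AT[OF kA, unfolded V_def]] v(1) vyt yn yt False kA \<open>t = T\<close>
            by (auto simp: V_def)
          then show False using notadj[OF v] kA by (auto simp: X_def)
        qed
      qed
      then have "Cl \<subseteq> N" using ClE by (auto simp: N_def)
      then have "card Cl \<le> card N" using finN by (simp add: card_mono)
      then show ?thesis using cardCl assms unfolding degree_in_def N_def by auto
    next
      case True
      then obtain i \<alpha> where i: "i < k-1" "\<alpha> \<in> A" "t = T[i:=\<alpha>]" by blast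
      have \<alpha>k: "k \<le> \<alpha>" "\<alpha> \<le> k + h" using i(2) by (auto simp: A_def)
      have tnth: "\<And>j. j < k - 1 \<Longrightarrow> t!j = (if j = i then \<alpha> else Suc j)"
        using i lenT nthT by auto
      have only: "u = Suc i # t" if u: "E v u" "u \<in> S" for u
      proof -
        have "(\<exists>j<k-1. u = t!j # t[j:=y]) \<or> (\<exists>b\<in>{1..n}-set(y#t). u = b#t)"
          using u(1) adj_iff[OF vk] by (auto simp: E_def vyt)
        then show ?thesis
        proof
          assume "\<exists>j<k-1. u = t!j # t[j:=y]"
          then obtain j where j: "j < k-1" "u = t!j # t[j:=y]" by blast
          from Sform[OF u(2)] show ?thesis
          proof
            assume "\<exists>c\<in>{k+h+1..n}. u = c#T"
            then obtain c where c: "c \<in> {k+h+1..n}" "t!j = c" "t[j:=y] = T" using j by auto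
            show ?thesis
            proof (cases "j = i")
              case True then show ?thesis using c tnth j \<alpha>k by auto
            next
              case False
              have "t[j:=y]!i = T!i" using c by simp
              then show ?thesis using False tnth i lent nthT \<alpha>k by auto
            qed
          next
            assume "\<exists>i'<k-1. \<exists>\<alpha>'\<in>A. u = Suc i' # T[i':=\<alpha>']"
            then obtain i' \<alpha>' where c: "i' < k-1" "t!j = Suc i'" "t[j:=y] = T[i':=\<alpha>']"
              using j by auto
            show ?thesis
            proof (cases "j = i")
              case True then show ?thesis using c tnth j \<alpha>k by auto
            next
              case False
              then have "i' = j" using c tnth j by auto
              have "t[j:=y]!i = T[i':=\<alpha>']!i" using c by simp
              then show ?thesis using False \<open>i' = j\<close> tnth i lent lenT nthT \<alpha>k by auto
            qed
          qed
        next
          assume "\<exists>b\<in>{1..n}-set(y#t). u = b#t"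
          then obtain b where b: "u = b#t" by blast
          from Sform[OF u(2)] show ?thesis
          proof
            assume "\<exists>c\<in>{k+h+1..n}. u = c#T"
            then have "t = T" using b by auto
            then have "t!i = T!i" by simp
            then show ?thesis using tnth i nthT \<alpha>k by auto
          next
            assume "\<exists>i'<k-1. \<exists>\<alpha>'\<in>A. u = Suc i' # T[i':=\<alpha>']"
            then obtain i' \<alpha>' where c: "i' < k-1" "b = Suc i'" "t = T[i':=\<alpha>']"
              using b by auto
            have "i' = i"
            proof (rule ccontr)
              assume "i' \<noteq> i"
              have "t!i = T[i':=\<alpha>']!i" using c by simp
              then show False using \<open>i' \<noteq> i\<close> tnth i lenT nthT \<alpha>k by auto
            qed
            then show ?thesis using b c by simp
          qed
        qed
      qed
      have "(Cl \<union> Sw) - {Suc i # t} \<subseteq> N" using ClE SwE only by (auto simp: N_def)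
      then have "card ((Cl \<union> Sw) - {Suc i # t}) \<le> card N" using finN by (simp add: card_mono)
      moreover have "card ((Cl \<union> Sw) - {Suc i # t}) \<ge> n - 2"
        using cardU card_Diff_singleton_if[of "Cl \<union> Sw" "Suc i # t"] by auto
      ultimately show ?thesis using assms unfolding degree_in_def N_def by auto
    qed
  qed
  have mindeg: "min_degree_ge (V - S) E h"
    unfolding min_degree_ge_def using degX degR by blast
  define r where "r = Suc k # k # [2..<k]"
  have rV: "r \<in> V" using kn by (auto simp: r_def V_def kperms_def)
  have rS: "r \<notin> S"
  proof
    assume "r \<in> S"
    from Sform[OF this] show False
    proof
      assume "\<exists>c\<in>{k+h+1..n}. r = c#T"
      then have "k # [2..<k] = T" by (auto simp: r_def)
      then have "(k # [2..<k])!0 = T!0" by simp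
      then show False using nthT[of 0] kn by simp
    next
      assume "\<exists>i<k-1. \<exists>\<alpha>\<in>A. r = Suc i # T[i:=\<alpha>]"
      then show False by (auto simp: r_def)
    qed
  qed
  have rX: "r \<notin> X"
  proof
    assume "r \<in> X"
    then have "k # [2..<k] = T" by (auto simp: r_def X_def)
    then have "(k # [2..<k])!0 = T!0" by simp
    then show False using nthT[of 0] kn by simp
  qed
  have kA: "k \<in> A" by (simp add: A_def)
  have x0: "k#T \<in> V - S" "k#T \<in> X" using AT[OF kA] SX kA by (auto simp: X_def)
  have stay: "P\<^sup>*\<^sup>* a z \<Longrightarrow> a \<in> X \<Longrightarrow> z \<in> X"
    if "P = (\<lambda>x y. x \<in> V - S \<and> y \<in> V - S \<and> E x y)" for P a z
  proof (induction rule: rtranclp_induct)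
    case base then show ?case by simp
  next
    case (step y z)
    then show ?case using that notadj by auto
  qed
  have disc: "\<not> connected_graph (V - S) E"
  proof
    assume "connected_graph (V - S) E"
    then have "(\<lambda>x y. x \<in> V - S \<and> y \<in> V - S \<and> E x y)\<^sup>*\<^sup>* (k#T) r"
      unfolding connected_graph_def using x0 rV rS by auto
    then show False using stay[OF refl] x0 rX by blast
  qed
  have hc: "h_cut V E h S" unfolding h_cut_def using SV disc mindeg by auto
  have Ssub: "S \<subseteq> (\<lambda>c. c#T) ` {k+h+1..n} \<union> (\<lambda>(i,\<alpha>). Suc i # T[i:=\<alpha>]) ` ({..<k-1} \<times> A)"
    using Sform by fastforce
  have "card S \<le> card ((\<lambda>c. c#T) ` {k+h+1..n} \<union> (\<lambda>(i,\<alpha>). Suc i # T[i:=\<alpha>]) ` ({..<k-1} \<times> A))"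
    by (rule card_mono[OF _ Ssub]) (auto simp: A_def)
  also have "\<dots> \<le> card ((\<lambda>c. c#T) ` {k+h+1..n}) + card ((\<lambda>(i,\<alpha>). Suc i # T[i:=\<alpha>]) ` ({..<k-1} \<times> A))"
    by (rule card_Un_le)
  also have "\<dots> \<le> card {k+h+1..n} + card ({..<k-1} \<times> A)"
    by (intro add_mono card_image_le) (auto simp: A_def)
  also have "\<dots> = (n - k - h) + (k - 1) * (h + 1)" by (simp add: A_def card_cartesian_product)
  also have "\<dots> = n + h * (k - 2) - 1"
  proof -
    obtain k' where k': "k = k' + 2" using kn by (metis add.commute le_Suc_ex)
    obtain m where m: "n = k + h + m" using kn by (metis le_Suc_ex)
    show ?thesis unfolding m k' by (simp add: algebra_simps)
  qed
  finally have cS: "card S \<le> n + h * (k - 2) - 1" .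
  have "super_conn V E h \<le> card S"
    unfolding super_conn_def
  proof (rule Min_le)
    have "{card S |S. h_cut V E h S} \<subseteq> card ` Pow V" by (auto simp: h_cut_def)
    then show "finite {card S |S. h_cut V E h S}" using finV by (meson finite_Pow_iff finite_imageI finite_subset)
    show "card S \<in> {card S |S. h_cut V E h S}" using hc by auto
  qed
  then show ?thesis using hc cS unfolding V_def E_def by auto
qed

end
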